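(* Let $\Gamma$ be a $q$-connected finite simple graph on $n$ vertices ($q\ge1$). Then $\zeta_\alpha(\Gamma)=0$ for every composition $\alpha=(a_1,\dots,a_k)\models n$ such that $a_j>1$ for some $j>k-q$. In particular, if $\Gamma$ is connected then $\zeta_\alpha(\Gamma)=0$ whenever the last part of $\alpha$ exceeds $1$.
   Context: A graph is $q$-connected if it has more than $q$ vertices and remains connected after deleting any set of fewer than $q$ vertices. For a coloring $\lambda:V\to\mathbb{N}$ of a finite simple graph $\Gamma$ with values $i_1<\dots<i_k$, let $I_j=\lambda^{-1}(\{i_1,\dots,i_j\})$, $I_0=\emptyset$. It is ordered if for each $j$, no two distinct vertices $u,w$ with $\lambda(u)=\lambda(w)=i_j$ are joined by a path in $\Gamma$ (possibly a single edge) all of whose internal vertices lie in $I_{j-1}$. Its type is $(|\lambda^{-1}(i_1)|,\dots,|\lambda^{-1}(i_k)|)$. For a composition $\alpha$ of $n$ with $k(\alpha)$ parts, $\zeta_\alpha(\Gamma)$ is the number of surjective ordered colorings $\lambda:V\to\{1,\dots,k(\alpha)\}$ of type $\alpha$. *)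

theory Defs
  imports Main "HOL-Library.FuncSet"
begin

definition simple_graph :: "'a set \<Rightarrow> ('a \<Rightarrow> 'a \<Rightarrow> bool) \<Rightarrow> bool" where
  "simple_graph V E \<longleftrightarrow> finite V \<and>
     (\<forall>u v. E u v \<longrightarrow> u \<in> V \<and> v \<in> V \<and> u \<noteq> v \<and> E v u)"

definition is_path :: "('a \<Rightarrow> 'a \<Rightarrow> bool) \<Rightarrow> 'a \<Rightarrow> 'a list \<Rightarrow> 'a \<Rightarrow> bool" where
  "is_path E u xs w \<longleftrightarrow> distinct (u # xs @ [w]) \<and>
     (\<forall>i < length (u # xs). E ((u # xs @ [w]) ! i) ((u # xs @ [w]) ! Suc i))"

definition joined_through :: "('a \<Rightarrow> 'a \<Rightarrow> bool) \<Rightarrow> 'a set \<Rightarrow> 'a \<Rightarrow> 'a \<Rightarrow> bool" where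
  "joined_through E S u w \<longleftrightarrow> (\<exists>xs. set xs \<subseteq> S \<and> is_path E u xs w)"

definition connected_on :: "'a set \<Rightarrow> ('a \<Rightarrow> 'a \<Rightarrow> bool) \<Rightarrow> bool" where
  "connected_on W E \<longleftrightarrow> (\<forall>u\<in>W. \<forall>w\<in>W. u \<noteq> w \<longrightarrow> joined_through E W u w)"

definition q_connected :: "nat \<Rightarrow> 'a set \<Rightarrow> ('a \<Rightarrow> 'a \<Rightarrow> bool) \<Rightarrow> bool" where
  "q_connected q V E \<longleftrightarrow> card V > q \<and>
     (\<forall>S \<subseteq> V. card S < q \<longrightarrow> connected_on (V - S) E)"

definition ordered_coloring :: "'a set \<Rightarrow> ('a \<Rightarrow> 'a \<Rightarrow> bool) \<Rightarrow> ('a \<Rightarrow> nat) \<Rightarrow> bool" where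
  "ordered_coloring V E f \<longleftrightarrow>
     (\<forall>u\<in>V. \<forall>w\<in>V. u \<noteq> w \<and> f u = f w \<longrightarrow>
        \<not> joined_through E {v\<in>V. f v < f u} u w)"

definition composition :: "nat list \<Rightarrow> nat \<Rightarrow> bool" where
  "composition \<alpha> n \<longleftrightarrow> (\<forall>a\<in>set \<alpha>. 0 < a) \<and> sum_list \<alpha> = n"

definition zeta :: "nat list \<Rightarrow> 'a set \<Rightarrow> ('a \<Rightarrow> 'a \<Rightarrow> bool) \<Rightarrow> nat" where
  "zeta \<alpha> V E = card {f \<in> V \<rightarrow>\<^sub>E {1..length \<alpha>}.
      f ` V = {1..length \<alpha>} \<and> ordered_coloring V E f \<and>
      (\<forall>j\<in>{1..length \<alpha>}. card {v\<in>V. f v = j} = \<alpha> ! (j - 1))}"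

end

theory Submission
  imports Defs
begin

lemma path_prefix:
  assumes "is_path E u xs w" "i < length xs"
  shows "is_path E u (take i xs) (xs ! i)"
proof -
  let ?L = "u # xs @ [w]"
  have eq: "u # take i xs @ [xs ! i] = take (Suc (Suc i)) ?L"
    using assms(2) by (simp add: take_Suc_conv_app_nth)
  have d: "distinct ?L" "\<forall>m < length (u # xs). E (?L ! m) (?L ! Suc m)"
    using assms(1) unfolding is_path_def by auto
  show ?thesis unfolding is_path_def eq
  proof (intro conjI allI impI)
    show "distinct (take (Suc (Suc i)) ?L)" by (rule distinct_take[OF d(1)])
    fix m assume m: "m < length (u # take i xs)"
    hence m': "m < Suc i" using assms(2) by simp
    have "E (?L ! m) (?L ! Suc m)" using d(2) m' assms(2) by auto
    moreover have "take (Suc (Suc i)) ?L ! m = ?L ! m" using m' by (intro nth_take) simp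
    moreover have "take (Suc (Suc i)) ?L ! Suc m = ?L ! Suc m" using m' by (intro nth_take) simp
    ultimately show "E (take (Suc (Suc i)) ?L ! m) (take (Suc (Suc i)) ?L ! Suc m)"
      by simp
  qed
qed

lemma key:
  assumes oc: "ordered_coloring V E f"
    and con: "connected_on {v\<in>V. f v \<le> d} E"
    and uw: "u \<in> V" "w \<in> V" "u \<noteq> w" "f u = d" "f w = d"
  shows False
proof -
  have "joined_through E {v\<in>V. f v \<le> d} u w" using con uw unfolding connected_on_def by auto
  then obtain xs where xs: "set xs \<subseteq> {v\<in>V. f v \<le> d}" "is_path E u xs w"
    unfolding joined_through_def by auto
  let ?ys = "takeWhile (\<lambda>v. f v < d) xs"
  show False
  proof (cases "?ys = xs")
    case True
    have "\<forall>v\<in>set ?ys. f v < d" by (auto dest: set_takeWhileD)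
    hence "\<forall>v\<in>set xs. f v < d" using True by simp
    hence "set xs \<subseteq> {v\<in>V. f v < f u}" using xs(1) uw(4) by auto
    hence "joined_through E {v\<in>V. f v < f u} u w" using xs(2) unfolding joined_through_def by auto
    moreover have "\<not> joined_through E {v\<in>V. f v < f u} u w"
      using oc[unfolded ordered_coloring_def, rule_format, of u w] uw by simp
    ultimately show False by simp
  next
    case False
    define i where "i = length ?ys"
    have l1: "i \<le> length xs" unfolding i_def by (rule length_takeWhile_le)
    have l2: "i \<noteq> length xs"
    proof
      assume "i = length xs"
      hence "?ys = take (length xs) xs" unfolding i_def by (metis takeWhile_eq_take)
      thus False using False by simp
    qed
    have il: "i < length xs" using l1 l2 by simp
    have ti: "take i xs = ?ys" unfolding i_def by (metis takeWhile_eq_take)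
    have nz: "\<not> f (xs ! i) < d" unfolding i_def using il i_def nth_length_takeWhile by blast
    have xi: "xs ! i \<in> V" "f (xs ! i) \<le> d" using xs(1) il nth_mem by blast+
    have p: "is_path E u ?ys (xs ! i)" using path_prefix[OF xs(2) il] ti by simp
    have ne: "xs ! i \<noteq> u" using p unfolding is_path_def by auto
    have "set ?ys \<subseteq> {v\<in>V. f v < f u}" using xs(1) uw
      by (auto dest: set_takeWhileD)
    hence "joined_through E {v\<in>V. f v < f u} u (xs ! i)" using p unfolding joined_through_def by auto
    moreover have feq: "f (xs ! i) = f u" using xi nz uw by simp
    moreover have "\<not> joined_through E {v\<in>V. f v < f u} u (xs ! i)"
      using oc[unfolded ordered_coloring_def, rule_format, of u "xs ! i"] uw(1) xi(1) ne feq by simp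
    ultimately show False by simp
  qed
qed

lemma two_elems:
  assumes "finite A" "2 \<le> card A"
  obtains x y where "x \<in> A" "y \<in> A" "x \<noteq> y"
proof -
  have "A \<noteq> {}" using assms by auto
  then obtain x where x: "x \<in> A" by blast
  have "card (A - {x}) \<ge> 1" using assms x by simp
  then obtain y where "y \<in> A - {x}" by (metis card.empty ex_in_conv not_one_le_zero)
  thus ?thesis using that x by blast
qed

lemma top_classes:
  assumes sg: "simple_graph V E" and qc: "q_connected q V E" and oc: "ordered_coloring V E f"
    and fV: "\<forall>v\<in>V. f v \<in> {1..k}" and sj: "\<forall>d\<in>{1..k}. \<exists>v\<in>V. f v = d"
  shows "t < q \<Longrightarrow> t \<le> k \<Longrightarrow> card {v\<in>V. f v > k - t} = t"
proof (induction t)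
  case 0
  have "{v\<in>V. f v > k} = {}" using fV by (auto simp: not_less)
  then show ?case by (metis card.empty diff_zero)
next
  case (Suc t)
  define d where "d = k - t"
  define S where "S = {v\<in>V. f v > d}"
  have fin: "finite V" using sg unfolding simple_graph_def by auto
  have cS: "card S = t" using Suc unfolding S_def d_def by simp
  have "\<forall>S\<subseteq>V. card S < q \<longrightarrow> connected_on (V - S) E" using qc unfolding q_connected_def by blast
  moreover have "S \<subseteq> V" "card S < q" using cS Suc(2) unfolding S_def by auto
  ultimately have "connected_on (V - S) E" by blast
  moreover have VS: "V - S = {v\<in>V. f v \<le> d}" unfolding S_def by auto
  ultimately have con: "connected_on {v\<in>V. f v \<le> d} E" by simp
  have d1: "d \<in> {1..k}" using Suc unfolding d_def by auto
  obtain x where x: "x \<in> V" "f x = d" using sj d1 by blast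
  have uniq: "y = x" if "y \<in> V" "f y = d" for y
  proof (rule ccontr)
    assume "y \<noteq> x"
    thus False using key[OF oc con, of y x] x that by simp
  qed
  have kd: "k - Suc t = d - 1" "d \<ge> 1" using d1 unfolding d_def by auto
  have eq: "{v\<in>V. f v > k - Suc t} = insert x S"
  proof (rule set_eqI, rule iffI)
    fix v assume "v \<in> {v\<in>V. f v > k - Suc t}"
    hence v: "v \<in> V" "f v > d - 1" using kd by auto
    show "v \<in> insert x S"
    proof (cases "f v = d")
      case True thus ?thesis using uniq[OF v(1)] by blast
    next
      case False thus ?thesis using v unfolding S_def by auto
    qed
  next
    fix v assume "v \<in> insert x S"
    thus "v \<in> {v\<in>V. f v > k - Suc t}" using x kd unfolding S_def by auto
  qed
  have "x \<notin> S" using x unfolding S_def by auto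
  moreover have "finite S" using fin unfolding S_def by auto
  ultimately show ?case using eq cS by simp
qed

lemma part1:
  assumes sg: "simple_graph V E" and h: "1 \<le> q \<and> q_connected q V E"
    and a: "composition \<alpha> (card V) \<and> j < length \<alpha> \<and> length \<alpha> < j + 1 + q \<and> \<alpha> ! j > 1"
  shows "zeta \<alpha> V E = 0"
proof -
  have fin: "finite V" using sg unfolding simple_graph_def by auto
  let ?k = "length \<alpha>"
  show ?thesis unfolding zeta_def
  proof (rule ccontr)
    assume "card {f \<in> V \<rightarrow>\<^sub>E {1..?k}. f ` V = {1..?k} \<and> ordered_coloring V E f \<and>
      (\<forall>j\<in>{1..?k}. card {v\<in>V. f v = j} = \<alpha> ! (j - 1))} \<noteq> 0"
    hence "{f \<in> V \<rightarrow>\<^sub>E {1..?k}. f ` V = {1..?k} \<and> ordered_coloring V E f \<and>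
      (\<forall>j\<in>{1..?k}. card {v\<in>V. f v = j} = \<alpha> ! (j - 1))} \<noteq> {}" by (metis card.empty)
    then obtain f where f: "f \<in> V \<rightarrow>\<^sub>E {1..?k}" "f ` V = {1..?k}" "ordered_coloring V E f"
      "\<forall>i\<in>{1..?k}. card {v\<in>V. f v = i} = \<alpha> ! (i - 1)"
      by blast
    have fV: "\<forall>v\<in>V. f v \<in> {1..?k}" using f(1) by auto
    have sj: "\<forall>d\<in>{1..?k}. \<exists>v\<in>V. f v = d"
    proof
      fix d assume "d \<in> {1..?k}"
      hence "d \<in> f ` V" using f(2) by simp
      thus "\<exists>v\<in>V. f v = d" by auto
    qed
    define t where "t = ?k - (j + 1)"
    have tq: "t < q" "t \<le> ?k" using a unfolding t_def by auto
    have cS: "card {v\<in>V. f v > ?k - t} = t"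
      using top_classes[OF sg _ f(3) fV sj tq] h by blast
    have kt: "?k - t = j + 1" using a unfolding t_def by auto
    have "connected_on (V - {v\<in>V. f v > j + 1}) E"
    proof -
      have qc: "\<forall>S\<subseteq>V. card S < q \<longrightarrow> connected_on (V - S) E" using h unfolding q_connected_def by blast
      have sub: "{v\<in>V. f v > j + 1} \<subseteq> V" by blast
      have "card {v\<in>V. f v > j + 1} = t" using cS unfolding kt .
      hence cq: "card {v\<in>V. f v > j + 1} < q" using tq(1) by simp
      show ?thesis using qc[rule_format, OF sub cq] .
    qed
    moreover have "V - {v\<in>V. f v > j + 1} = {v\<in>V. f v \<le> j + 1}" by auto
    ultimately have con: "connected_on {v\<in>V. f v \<le> j + 1} E" by simp
    have "card {v\<in>V. f v = j + 1} = \<alpha> ! j" using f(4)[rule_format, of "j+1"] a by simp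
    hence two2: "2 \<le> card {v\<in>V. f v = j + 1}" using a by simp
    have fin2: "finite {v\<in>V. f v = j + 1}" using fin by simp
    obtain u w where uw: "u \<in> {v\<in>V. f v = j + 1}" "w \<in> {v\<in>V. f v = j + 1}" "u \<noteq> w"
      by (rule two_elems[OF fin2 two2])
    show False using key[OF f(3) con, of u w] uw by simp
  qed
qed

lemma part2:
  assumes sg: "simple_graph V E" and con0: "connected_on V E"
    and a: "composition \<alpha> (card V) \<and> \<alpha> \<noteq> [] \<and> last \<alpha> > 1"
  shows "zeta \<alpha> V E = 0"
proof -
  have fin: "finite V" using sg unfolding simple_graph_def by auto
  let ?k = "length \<alpha>"
  show ?thesis unfolding zeta_def
  proof (rule ccontr)
    assume "card {f \<in> V \<rightarrow>\<^sub>E {1..?k}. f ` V = {1..?k} \<and> ordered_coloring V E f \<and>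
      (\<forall>j\<in>{1..?k}. card {v\<in>V. f v = j} = \<alpha> ! (j - 1))} \<noteq> 0"
    hence "{f \<in> V \<rightarrow>\<^sub>E {1..?k}. f ` V = {1..?k} \<and> ordered_coloring V E f \<and>
      (\<forall>j\<in>{1..?k}. card {v\<in>V. f v = j} = \<alpha> ! (j - 1))} \<noteq> {}" by (metis card.empty)
    then obtain f where f: "f \<in> V \<rightarrow>\<^sub>E {1..?k}" "f ` V = {1..?k}" "ordered_coloring V E f"
      "\<forall>i\<in>{1..?k}. card {v\<in>V. f v = i} = \<alpha> ! (i - 1)"
      by blast
    have "{v\<in>V. f v \<le> ?k} = V" using f(1) by auto
    hence con: "connected_on {v\<in>V. f v \<le> ?k} E" using con0 by simp
    have "card {v\<in>V. f v = ?k} = \<alpha> ! (?k - 1)" using f(4)[rule_format, of ?k] a by (simp add: Suc_le_eq)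
    also have "\<dots> = last \<alpha>" using a by (simp add: last_conv_nth)
    finally have two2: "2 \<le> card {v\<in>V. f v = ?k}" using a by simp
    have fin2: "finite {v\<in>V. f v = ?k}" using fin by simp
    obtain u w where uw: "u \<in> {v\<in>V. f v = ?k}" "w \<in> {v\<in>V. f v = ?k}" "u \<noteq> w"
      by (rule two_elems[OF fin2 two2])
    show False using key[OF f(3) con, of u w] uw by simp
  qed
qed

theorem mainTheorem11:
  fixes V :: "'a set" and E :: "'a \<Rightarrow> 'a \<Rightarrow> bool" and q :: nat
  assumes "simple_graph V E"
  shows "(1 \<le> q \<and> q_connected q V E \<longrightarrow>
            (\<forall>\<alpha> j. composition \<alpha> (card V) \<and> j < length \<alpha> \<and> length \<alpha> < j + 1 + q
                 \<and> \<alpha> ! j > 1 \<longrightarrow> zeta \<alpha> V E = 0))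
       \<and> (connected_on V E \<longrightarrow>
            (\<forall>\<alpha>. composition \<alpha> (card V) \<and> \<alpha> \<noteq> [] \<and> last \<alpha> > 1 \<longrightarrow> zeta \<alpha> V E = 0))"
  using part1[OF assms] part2[OF assms] by blast

end
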